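(* Let $R$ and $S$ be commutative rings with identity, $f:R\to S$ a ring homomorphism, and $J$ a nonzero proper ideal of $S$. If $R\bowtie^f J$ is compactly packed, then $R$ is compactly packed and the set $\operatorname{Spec}(S)\setminus V(J)$ is compactly packed.
   Context: $R\bowtie^f J:=\{(r,f(r)+j)\mid r\in R,\ j\in J\}$, a subring of $R\times S$. For a commutative ring $A$, $V(I)$ is the set of prime ideals of $A$ containing the ideal $I$. A subset $X\subseteq\operatorname{Spec}(A)$ is compactly packed if whenever an ideal $I$ of $A$ is contained in the union of a family $\{\mathfrak{p}_i\}_i$ of elements of $X$, then $I\subseteq\mathfrak{p}_i$ for some $i$; the ring $A$ is compactly packed if $\operatorname{Spec}(A)$ is compactly packed. *)

theory Defs
  imports "HOL-Algebra.Algebra"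
begin

definition Spec :: "('a, 'm) ring_scheme \<Rightarrow> 'a set set" where
  "Spec A = {P. primeideal P A}"

definition Vset :: "('a, 'm) ring_scheme \<Rightarrow> 'a set \<Rightarrow> 'a set set" where
  "Vset A I = {P \<in> Spec A. I \<subseteq> P}"

definition compactly_packed_set :: "('a, 'm) ring_scheme \<Rightarrow> 'a set set \<Rightarrow> bool" where
  "compactly_packed_set A Xs \<longleftrightarrow>
     (\<forall>K Fam. ideal K A \<longrightarrow> Fam \<subseteq> Xs \<longrightarrow> K \<subseteq> Union Fam \<longrightarrow> (\<exists>P\<in>Fam. K \<subseteq> P))"

definition compactly_packed :: "('a, 'm) ring_scheme \<Rightarrow> bool" where
  "compactly_packed A \<longleftrightarrow> compactly_packed_set A (Spec A)"

definition amalg :: "('a, 'm) ring_scheme \<Rightarrow> ('b, 'n) ring_scheme \<Rightarrow> ('a \<Rightarrow> 'b)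
    \<Rightarrow> 'b set \<Rightarrow> ('a \<times> 'b) ring" where
  "amalg R S f J = (RDirProd R S)\<lparr>carrier :=
      {(r, f r \<oplus>\<^bsub>S\<^esub> j) | r j. r \<in> carrier R \<and> j \<in> J}\<rparr>"

end

theory Submission
  imports Defs
begin

lemma RD_ops:
 "a \<otimes>\<^bsub>RDirProd R S\<^esub> b = (fst a \<otimes>\<^bsub>R\<^esub> fst b, snd a \<otimes>\<^bsub>S\<^esub> snd b)"
 "a \<oplus>\<^bsub>RDirProd R S\<^esub> b = (fst a \<oplus>\<^bsub>R\<^esub> fst b, snd a \<oplus>\<^bsub>S\<^esub> snd b)"
 "\<one>\<^bsub>RDirProd R S\<^esub> = (\<one>\<^bsub>R\<^esub>, \<one>\<^bsub>S\<^esub>)"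
 "\<zero>\<^bsub>RDirProd R S\<^esub> = (\<zero>\<^bsub>R\<^esub>, \<zero>\<^bsub>S\<^esub>)"
  by (auto simp: RDirProd_def DirProd_def monoid.defs case_prod_beta)

lemma RD_neg:
  assumes "ring R" "ring S" "a \<in> carrier R" "b \<in> carrier S"
  shows "a_inv (RDirProd R S) (a, b) = (\<ominus>\<^bsub>R\<^esub> a, \<ominus>\<^bsub>S\<^esub> b)"
proof -
  interpret P: ring "RDirProd R S" using RDirProd_ring assms by blast
  interpret R: ring R by fact
  interpret S: ring S by fact
  show ?thesis
    by (rule P.minus_equality) (auto simp: RD_ops RDirProd_carrier assms R.l_neg S.l_neg)
qed

lemma amalg_ops:
 "carrier (amalg R S f J) = {(r, f r \<oplus>\<^bsub>S\<^esub> j) | r j. r \<in> carrier R \<and> j \<in> J}"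
 "a \<otimes>\<^bsub>amalg R S f J\<^esub> b = (fst a \<otimes>\<^bsub>R\<^esub> fst b, snd a \<otimes>\<^bsub>S\<^esub> snd b)"
 "a \<oplus>\<^bsub>amalg R S f J\<^esub> b = (fst a \<oplus>\<^bsub>R\<^esub> fst b, snd a \<oplus>\<^bsub>S\<^esub> snd b)"
 "\<one>\<^bsub>amalg R S f J\<^esub> = (\<one>\<^bsub>R\<^esub>, \<one>\<^bsub>S\<^esub>)"
 "\<zero>\<^bsub>amalg R S f J\<^esub> = (\<zero>\<^bsub>R\<^esub>, \<zero>\<^bsub>S\<^esub>)"
  by (auto simp: amalg_def RD_ops)

lemma amalg_cring:
  assumes R: "cring R" and S: "cring S" and f: "f \<in> ring_hom R S" and J: "ideal J S"
  shows "cring (amalg R S f J)"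
proof -
  interpret R: cring R by fact
  interpret S: cring S by fact
  interpret h: ring_hom_cring R S f using R S f by (simp add: ring_hom_cring_def ring_hom_cring_axioms_def)
  interpret J: ideal J S by fact
  interpret P: ring "RDirProd R S" using RDirProd_ring R.ring_axioms S.ring_axioms by blast
  let ?H = "{(r, f r \<oplus>\<^bsub>S\<^esub> j) | r j. r \<in> carrier R \<and> j \<in> J}"
  have memH: "\<And>r j. r \<in> carrier R \<Longrightarrow> j \<in> J \<Longrightarrow> (r, f r \<oplus>\<^bsub>S\<^esub> j) \<in> ?H"
    by blast
  have sub: "?H \<subseteq> carrier (RDirProd R S)"
    by (auto simp: RDirProd_carrier)
  have "subring ?H (RDirProd R S)"
  proof (rule P.subringI[OF sub])
    show "\<one>\<^bsub>RDirProd R S\<^esub> \<in> ?H"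
      by (auto simp: RD_ops intro!: exI[of _ "\<one>\<^bsub>R\<^esub>"] exI[of _ "\<zero>\<^bsub>S\<^esub>"])
  next
    fix h assume "h \<in> ?H"
    then obtain r j where h: "h = (r, f r \<oplus>\<^bsub>S\<^esub> j)" "r \<in> carrier R" "j \<in> J" by blast
    have jc: "j \<in> carrier S" using h J.a_subset by blast
    have "a_inv (RDirProd R S) h = (\<ominus>\<^bsub>R\<^esub> r, \<ominus>\<^bsub>S\<^esub> (f r \<oplus>\<^bsub>S\<^esub> j))"
      using h jc by (simp add: RD_neg R.ring_axioms S.ring_axioms)
    also have "\<dots> = (\<ominus>\<^bsub>R\<^esub> r, f (\<ominus>\<^bsub>R\<^esub> r) \<oplus>\<^bsub>S\<^esub> \<ominus>\<^bsub>S\<^esub> j)"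
      using h jc by (simp add: S.minus_add)
    finally have eq: "a_inv (RDirProd R S) h = (\<ominus>\<^bsub>R\<^esub> r, f (\<ominus>\<^bsub>R\<^esub> r) \<oplus>\<^bsub>S\<^esub> \<ominus>\<^bsub>S\<^esub> j)" .
    show "a_inv (RDirProd R S) h \<in> ?H"
      unfolding eq by (intro memH R.a_inv_closed J.a_inv_closed h)
  next
    fix h1 h2 assume "h1 \<in> ?H" "h2 \<in> ?H"
    then obtain r1 j1 r2 j2 where h: "h1 = (r1, f r1 \<oplus>\<^bsub>S\<^esub> j1)" "r1 \<in> carrier R" "j1 \<in> J"
      "h2 = (r2, f r2 \<oplus>\<^bsub>S\<^esub> j2)" "r2 \<in> carrier R" "j2 \<in> J" by blast
    have jc: "j1 \<in> carrier S" "j2 \<in> carrier S" using h J.a_subset by blast+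
    have eq: "h1 \<otimes>\<^bsub>RDirProd R S\<^esub> h2 = (r1 \<otimes>\<^bsub>R\<^esub> r2,
        f (r1 \<otimes>\<^bsub>R\<^esub> r2) \<oplus>\<^bsub>S\<^esub> ((f r1 \<otimes>\<^bsub>S\<^esub> j2) \<oplus>\<^bsub>S\<^esub> (j1 \<otimes>\<^bsub>S\<^esub> (f r2 \<oplus>\<^bsub>S\<^esub> j2))))"
    proof -
      have c: "f r1 \<in> carrier S" "f r2 \<in> carrier S" using h by auto
      have "(f r1 \<oplus>\<^bsub>S\<^esub> j1) \<otimes>\<^bsub>S\<^esub> (f r2 \<oplus>\<^bsub>S\<^esub> j2)
          = f r1 \<otimes>\<^bsub>S\<^esub> (f r2 \<oplus>\<^bsub>S\<^esub> j2) \<oplus>\<^bsub>S\<^esub> j1 \<otimes>\<^bsub>S\<^esub> (f r2 \<oplus>\<^bsub>S\<^esub> j2)"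
        using c jc by (intro S.l_distr) auto
      also have "\<dots> = (f r1 \<otimes>\<^bsub>S\<^esub> f r2 \<oplus>\<^bsub>S\<^esub> f r1 \<otimes>\<^bsub>S\<^esub> j2) \<oplus>\<^bsub>S\<^esub> j1 \<otimes>\<^bsub>S\<^esub> (f r2 \<oplus>\<^bsub>S\<^esub> j2)"
        using c jc by (simp only: S.r_distr)
      also have "\<dots> = f r1 \<otimes>\<^bsub>S\<^esub> f r2 \<oplus>\<^bsub>S\<^esub> (f r1 \<otimes>\<^bsub>S\<^esub> j2 \<oplus>\<^bsub>S\<^esub> j1 \<otimes>\<^bsub>S\<^esub> (f r2 \<oplus>\<^bsub>S\<^esub> j2))"
        using c jc by (intro S.a_assoc) auto
      finally show ?thesis using h by (simp add: RD_ops)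
    qed
    moreover have jj: "(f r1 \<otimes>\<^bsub>S\<^esub> j2) \<oplus>\<^bsub>S\<^esub> (j1 \<otimes>\<^bsub>S\<^esub> (f r2 \<oplus>\<^bsub>S\<^esub> j2)) \<in> J"
      using h jc by (simp add: J.I_l_closed J.I_r_closed J.a_closed)
    show "h1 \<otimes>\<^bsub>RDirProd R S\<^esub> h2 \<in> ?H"
      unfolding eq by (intro memH R.m_closed jj h)
    have eq2: "h1 \<oplus>\<^bsub>RDirProd R S\<^esub> h2 = (r1 \<oplus>\<^bsub>R\<^esub> r2, f (r1 \<oplus>\<^bsub>R\<^esub> r2) \<oplus>\<^bsub>S\<^esub> (j1 \<oplus>\<^bsub>S\<^esub> j2))"
      using h jc by (simp add: RD_ops S.a_assoc S.a_lcomm)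
    show "h1 \<oplus>\<^bsub>RDirProd R S\<^esub> h2 \<in> ?H"
      unfolding eq2 by (intro memH R.a_closed J.a_closed h)
  qed
  then have "subcring ?H (RDirProd R S)"
  proof (rule P.subcringI)
    fix h1 h2 assume "h1 \<in> ?H" "h2 \<in> ?H"
    then have "h1 \<in> carrier R \<times> carrier S" "h2 \<in> carrier R \<times> carrier S"
      using sub by (auto simp: RDirProd_carrier)
    then show "h1 \<otimes>\<^bsub>RDirProd R S\<^esub> h2 = h2 \<otimes>\<^bsub>RDirProd R S\<^esub> h1"
      by (simp add: RD_ops R.m_comm S.m_comm mem_Times_iff)
  qed
  then show ?thesis using P.subcring_iff[OF sub] by (simp add: amalg_def)
qed

lemma amalg_carrier_sub:
  assumes "ideal J S" "f \<in> ring_hom R S" "x \<in> carrier (amalg R S f J)"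
  shows "fst x \<in> carrier R" "snd x \<in> carrier S"
proof -
  interpret J: ideal J S by fact
  obtain r j where x: "x = (r, f r \<oplus>\<^bsub>S\<^esub> j)" "r \<in> carrier R" "j \<in> J"
    using assms(3) by (auto simp: amalg_ops)
  show "fst x \<in> carrier R" using x by simp
  show "snd x \<in> carrier S" using x J.a_subset ring_hom_closed[OF assms(2)] by auto
qed

lemma amalg_homs:
  assumes R: "cring R" and S: "cring S" and f: "f \<in> ring_hom R S" and J: "ideal J S"
  shows "ring_hom_ring (amalg R S f J) R fst" "ring_hom_ring (amalg R S f J) S snd"
proof -
  have A: "ring (amalg R S f J)" using amalg_cring[OF assms] cring.axioms(1) by blast
  show "ring_hom_ring (amalg R S f J) R fst"
    by (rule ring_hom_ringI[OF A cring.axioms(1)[OF R]])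
       (auto simp: amalg_ops amalg_carrier_sub[OF J f])
  show "ring_hom_ring (amalg R S f J) S snd"
    by (rule ring_hom_ringI[OF A cring.axioms(1)[OF S]])
       (auto simp: amalg_ops amalg_carrier_sub[OF J f])
qed

theorem theorem4p2:
  fixes R :: "('a, 'm) ring_scheme" and S :: "('b, 'n) ring_scheme"
    and f :: "'a \<Rightarrow> 'b" and J :: "'b set"
  assumes "cring R" and "cring S"
    and "f \<in> ring_hom R S"
    and "ideal J S" and "J \<noteq> {\<zero>\<^bsub>S\<^esub>}" and "J \<noteq> carrier S"
    and "compactly_packed (amalg R S f J)"
  shows "compactly_packed R \<and> compactly_packed_set S (Spec S - Vset S J)"
proof -
  let ?A = "amalg R S f J"
  interpret R: cring R by fact
  interpret S: cring S by fact
  interpret h: ring_hom_cring R S f using assms(1-3) by (simp add: ring_hom_cring_def ring_hom_cring_axioms_def)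
  interpret J: ideal J S by fact
  interpret A: cring ?A using amalg_cring assms(1-4) by blast
  interpret p1: ring_hom_ring ?A R fst using amalg_homs assms(1-4) by blast
  interpret p2: ring_hom_ring ?A S snd using amalg_homs assms(1-4) by blast
  have CP: "\<And>K Fam. ideal K ?A \<Longrightarrow> Fam \<subseteq> Spec ?A \<Longrightarrow> K \<subseteq> \<Union>Fam \<Longrightarrow> \<exists>P\<in>Fam. K \<subseteq> P"
    using assms(7) unfolding compactly_packed_def compactly_packed_set_def by blast
  have memA: "\<And>r j. r \<in> carrier R \<Longrightarrow> j \<in> J \<Longrightarrow> (r, f r \<oplus>\<^bsub>S\<^esub> j) \<in> carrier ?A"
    by (auto simp: amalg_ops)
  have part1: "compactly_packed R"
    unfolding compactly_packed_def compactly_packed_set_def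
  proof (intro allI impI)
    fix I Fam assume I: "ideal I R" and F: "Fam \<subseteq> Spec R" and IU: "I \<subseteq> \<Union>Fam"
    define pre where "pre P = {a \<in> carrier ?A. fst a \<in> P}" for P
    have "\<exists>P\<in>pre ` Fam. pre I \<subseteq> P"
    proof (rule CP)
      show "ideal (pre I) ?A" unfolding pre_def by (rule p1.ideal_vimage[OF I])
      show "pre ` Fam \<subseteq> Spec ?A"
        using F p1.primeideal_vimage[OF A.is_cring] unfolding Spec_def pre_def by blast
      show "pre I \<subseteq> \<Union>(pre ` Fam)" using IU unfolding pre_def by blast
    qed
    then obtain P where P: "P \<in> Fam" "pre I \<subseteq> pre P" by blast
    have "I \<subseteq> P"
    proof
      fix x assume x: "x \<in> I"
      then have xc: "x \<in> carrier R" using ideal.axioms(1)[OF I] additive_subgroup.a_subset by blast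
      have "(x, f x \<oplus>\<^bsub>S\<^esub> \<zero>\<^bsub>S\<^esub>) \<in> pre I"
        unfolding pre_def using memA[OF xc J.zero_closed] x by simp
      then show "x \<in> P" using P unfolding pre_def by auto
    qed
    then show "\<exists>P\<in>Fam. I \<subseteq> P" using P by blast
  qed
  have part2: "compactly_packed_set S (Spec S - Vset S J)"
    unfolding compactly_packed_set_def
  proof (intro allI impI)
    fix K Fam assume K: "ideal K S" and F: "Fam \<subseteq> Spec S - Vset S J" and KU: "K \<subseteq> \<Union>Fam"
    define pre where "pre Q = {a \<in> carrier ?A. snd a \<in> Q}" for Q
    define K' where "K' = {a \<in> carrier ?A. fst a \<in> {\<zero>\<^bsub>R\<^esub>}} \<inter> pre K"
    have "\<exists>P\<in>pre ` Fam. K' \<subseteq> P"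
    proof (rule CP)
      show "ideal K' ?A" unfolding K'_def pre_def
        by (rule A.i_intersect[OF p1.ideal_vimage[OF R.zeroideal] p2.ideal_vimage[OF K]])
      show "pre ` Fam \<subseteq> Spec ?A"
        using F p2.primeideal_vimage[OF A.is_cring] unfolding Spec_def pre_def by blast
      show "K' \<subseteq> \<Union>(pre ` Fam)" using KU unfolding pre_def K'_def by blast
    qed
    then obtain Q where Q: "Q \<in> Fam" "K' \<subseteq> pre Q" by blast
    have Qp: "primeideal Q S" and QJ: "\<not> J \<subseteq> Q" using Q F unfolding Spec_def Vset_def by auto
    then obtain j where j: "j \<in> J" "j \<notin> Q" by blast
    have jc: "j \<in> carrier S" using j J.a_subset by blast
    have "K \<subseteq> Q"
    proof
      fix k assume k: "k \<in> K"
      then have kc: "k \<in> carrier S" using ideal.axioms(1)[OF K] additive_subgroup.a_subset by blast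
      have kjK: "k \<otimes>\<^bsub>S\<^esub> j \<in> K" using ideal.I_r_closed[OF K k jc] .
      have kjJ: "k \<otimes>\<^bsub>S\<^esub> j \<in> J" using J.I_l_closed[OF j(1) kc] .
      have "(\<zero>\<^bsub>R\<^esub>, f \<zero>\<^bsub>R\<^esub> \<oplus>\<^bsub>S\<^esub> (k \<otimes>\<^bsub>S\<^esub> j)) \<in> carrier ?A"
        by (rule memA[OF R.zero_closed kjJ])
      then have "(\<zero>\<^bsub>R\<^esub>, k \<otimes>\<^bsub>S\<^esub> j) \<in> carrier ?A" using kc jc by simp
      then have "(\<zero>\<^bsub>R\<^esub>, k \<otimes>\<^bsub>S\<^esub> j) \<in> K'" unfolding K'_def pre_def using kjK by simp
      then have "k \<otimes>\<^bsub>S\<^esub> j \<in> Q" using Q unfolding pre_def by auto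
      then show "k \<in> Q" using primeideal.I_prime[OF Qp kc jc] j by blast
    qed
    then show "\<exists>P\<in>Fam. K \<subseteq> P" using Q by blast
  qed
  show ?thesis using part1 part2 by blast
qed

end
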